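(* Let $\mathcal{F}=\langle\mathbb{A},(\mu_i)_{i\in\mathsf{Ag}}\rangle$ be an APE-structure and $\mathbb{E}=(E,(\sim_i),(P_i),\Phi,\mathsf{pre})$ a probabilistic event structure over $\mathbb{A}$. Then for every $a\in\Phi$ and every $i\in\mathsf{Ag}$, the partial map $\mu^a_i$ is an $i$-premeasure on $\mathbb{A}$. Furthermore, if $a\leq y$ then $\mu^a_i(x)=\mu^a_i(x\wedge y)$ (for $x$ in the domain of $\mu^a_i$).
   Context: Fix a set $\mathsf{Ag}$ of agents. A monadic Heyting algebra is a Heyting algebra $\mathbb{L}$ with, for each $i\in\mathsf{Ag}$, monotone unary operations $\lozenge_i,\Box_i$ such that for all $a,b$: $a\leq\lozenge_i a$; $\Box_i a\leq a$; $\lozenge_i(a\vee b)\leq\lozenge_i a\vee\lozenge_i b$; $\Box_i(a\to b)\leq\Box_i a\to\Box_i b$; $\lozenge_i a\leq\Box_i\lozenge_i a$; $\lozenge_i\Box_i a\leq\Box_i a$; $\Box_i(a\to b)\leq\lozenge_i a\to\lozenge_i b$; $\lozenge_i\bot\leq\bot$; $\top\leq\Box_i\top$. An epistemic Heyting algebra is a finite monadic Heyting algebra with $\lozenge_i a\vee\neg\lozenge_i a=\top$ for all $i,a$. An element $a$ is $i$-minimal if $a\neq\bot$, $\lozenge_i a=a$, and whenever $b<a$ and $\lozenge_i b=b$ then $b=\bot$; $\mathsf{Min}_i(\mathbb{A})$ is the set of $i$-minimal elements and $\mathsf{Min}_i(\mathbb{A}){\downarrow}$ its down-set. A partial map $\mu:\mathbb{A}\to\mathbb{R}^+$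 is an $i$-premeasure if: (1) $\mathsf{dom}(\mu)=\mathsf{Min}_i(\mathbb{A}){\downarrow}$; (2) $\mu$ is order-preserving; (3) for every $a\in\mathsf{Min}_i(\mathbb{A})$ and all $b,c\leq a$, $\mu(b\vee c)=\mu(b)+\mu(c)-\mu(b\wedge c)$; (4) $\mu(\bot)=0$ if $\mathsf{dom}(\mu)\neq\varnothing$. It is an $i$-measure if moreover (5) for every $a\in\mathsf{Min}_i(\mathbb{A})$ and all $b,c\leq a$ with $b<c$, $\mu(b)<\mu(c)$; and (6) $\mu(a)=1$ for every $a\in\mathsf{Min}_i(\mathbb{A})$. An APE-structure is a pair $\langle\mathbb{A},(\mu_i)_{i\in\mathsf{Ag}}\rangle$ with $\mathbb{A}$ an epistemic Heyting algebra and each $\mu_i$ an $i$-measure on $\mathbb{A}$. A pre-ordered multiset on a set $X$ is a multiset of elements of $X$ in which the copies $x_1,\dots,x_n$ of any element carry the linear order $x_1\prec\cdots\prec x_n$. A probabilistic event structure over $\mathbb{A}$ is a tuple $(E,(\sim_i),(P_i),\Phi,\mathsf{pre})$: $E$ non-empty finite; each $\sim_i$ an equivalence relation on $E$; each $P_i:E\to\,]0,1]$ with $\sum\{P_i(e')\mid e'\sim_i e\}=1$; $\Phi$ a finite pre-ordered multiset on $\mathbb{A}$ such that any $a,b\in\Phi$ arising from distinct elements satisfy $a\wedge b=\bot$ or $a<b$ or $b<a$; $\mathsf{pre}(\bullet\mid a)$ a probability distribution on $E$ for each $a\in\Phi$; and if $\mathsf{pre}(e\mid a)=0$ then $\mathsf{pre}(e\mid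 b)=0$ for all $b\in\Phi$ with $a<b$ (distinct elements) or $a\prec b$ (copies). For $a\in\Phi$, $\mathrm{mb}(a)$ denotes the set of maximal elements of $\Phi\cap({\downarrow}a\setminus\{a\})$, and $\mu^a_i:\mathbb{A}\to\mathbb{R}^+$ is the partial function $\mu^a_i(x):=\mu_i(x\wedge a)-\sum_{b\in\mathrm{mb}(a)}\mu_i(x\wedge b)$, defined for $x\in\mathsf{Min}_i(\mathbb{A}){\downarrow}$. *)

theory Defs
  imports Complex_Main "HOL-Library.Multiset"
begin

text \<open>The Heyting algebra is the whole (finite) type 'a, a bounded lattice with an
  implication imp satisfying residuation. Agents are the elements of type 'i.\<close>

definition heyting :: "('a::bounded_lattice \<Rightarrow> 'a \<Rightarrow> 'a) \<Rightarrow> bool" where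
  "heyting imp \<longleftrightarrow> (\<forall>a b c. c \<le> imp a b \<longleftrightarrow> inf c a \<le> b)"

definition monadic_HA ::
  "('a::bounded_lattice \<Rightarrow> 'a \<Rightarrow> 'a) \<Rightarrow> ('i \<Rightarrow> 'a \<Rightarrow> 'a) \<Rightarrow> ('i \<Rightarrow> 'a \<Rightarrow> 'a) \<Rightarrow> bool" where
  "monadic_HA imp dia box \<longleftrightarrow> heyting imp \<and>
     (\<forall>i. mono (dia i) \<and> mono (box i) \<and>
        (\<forall>a b. a \<le> dia i a \<and> box i a \<le> a
           \<and> dia i (sup a b) \<le> sup (dia i a) (dia i b)
           \<and> box i (imp a b) \<le> imp (box i a) (box i b)
           \<and> dia i a \<le> box i (dia i a)
           \<and> dia i (box i a) \<le> box i a
           \<and> box i (imp a b) \<le> imp (dia i a) (dia i b))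
        \<and> dia i bot \<le> bot \<and> top \<le> box i top)"

definition epistemic_HA ::
  "('a::{finite,bounded_lattice} \<Rightarrow> 'a \<Rightarrow> 'a) \<Rightarrow> ('i \<Rightarrow> 'a \<Rightarrow> 'a) \<Rightarrow> ('i \<Rightarrow> 'a \<Rightarrow> 'a) \<Rightarrow> bool" where
  "epistemic_HA imp dia box \<longleftrightarrow> monadic_HA imp dia box \<and>
     (\<forall>i a. sup (dia i a) (imp (dia i a) bot) = top)"

definition i_minimal :: "('i \<Rightarrow> 'a::bounded_lattice \<Rightarrow> 'a) \<Rightarrow> 'i \<Rightarrow> 'a \<Rightarrow> bool" where
  "i_minimal dia i a \<longleftrightarrow> a \<noteq> bot \<and> dia i a = a \<and>
     (\<forall>b. b < a \<and> dia i b = b \<longrightarrow> b = bot)"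

definition Min_i :: "('i \<Rightarrow> 'a::bounded_lattice \<Rightarrow> 'a) \<Rightarrow> 'i \<Rightarrow> 'a set" where
  "Min_i dia i = {a. i_minimal dia i a}"

definition Min_down :: "('i \<Rightarrow> 'a::bounded_lattice \<Rightarrow> 'a) \<Rightarrow> 'i \<Rightarrow> 'a set" where
  "Min_down dia i = {x. \<exists>a\<in>Min_i dia i. x \<le> a}"

text \<open>Partial maps into the nonnegative reals are rendered as maps 'a \<rightharpoonup> real
  together with nonnegativity on the domain.\<close>
definition premeasure :: "('i \<Rightarrow> 'a::bounded_lattice \<Rightarrow> 'a) \<Rightarrow> 'i \<Rightarrow> ('a \<rightharpoonup> real) \<Rightarrow> bool" where
  "premeasure dia i m \<longleftrightarrow>
     dom m = Min_down dia i
     \<and> (\<forall>x\<in>dom m. the (m x) \<ge> 0)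
     \<and> (\<forall>x\<in>dom m. \<forall>y\<in>dom m. x \<le> y \<longrightarrow> the (m x) \<le> the (m y))
     \<and> (\<forall>a\<in>Min_i dia i. \<forall>b c. b \<le> a \<longrightarrow> c \<le> a \<longrightarrow>
           the (m (sup b c)) = the (m b) + the (m c) - the (m (inf b c)))
     \<and> (dom m \<noteq> {} \<longrightarrow> m bot = Some 0)"

definition i_measure :: "('i \<Rightarrow> 'a::bounded_lattice \<Rightarrow> 'a) \<Rightarrow> 'i \<Rightarrow> ('a \<rightharpoonup> real) \<Rightarrow> bool" where
  "i_measure dia i m \<longleftrightarrow> premeasure dia i m
     \<and> (\<forall>a\<in>Min_i dia i. \<forall>b c. b \<le> a \<longrightarrow> c \<le> a \<longrightarrow> b < c \<longrightarrow> the (m b) < the (m c))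
     \<and> (\<forall>a\<in>Min_i dia i. m a = Some 1)"

definition APE_structure ::
  "('a::{finite,bounded_lattice} \<Rightarrow> 'a \<Rightarrow> 'a) \<Rightarrow> ('i \<Rightarrow> 'a \<Rightarrow> 'a) \<Rightarrow> ('i \<Rightarrow> 'a \<Rightarrow> 'a)
   \<Rightarrow> ('i \<Rightarrow> 'a \<rightharpoonup> real) \<Rightarrow> bool" where
  "APE_structure imp dia box mu \<longleftrightarrow> epistemic_HA imp dia box \<and> (\<forall>i. i_measure dia i (mu i))"

text \<open>The pre-ordered multiset \<Phi> is a multiset;
  the copies of an element a are indexed by k < count \<Phi> a, with the linear order of copies
  given by the order of indices. pre a k is the distribution pre(\<bullet> | a_k).\<close>
definition prob_event_structure ::
  "'e set \<Rightarrow> ('i \<Rightarrow> 'e rel) \<Rightarrow> ('i \<Rightarrow> 'e \<Rightarrow> real) \<Rightarrow> 'a::bounded_lattice multiset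
   \<Rightarrow> ('a \<Rightarrow> nat \<Rightarrow> 'e \<Rightarrow> real) \<Rightarrow> bool" where
  "prob_event_structure E sim P Phi pre \<longleftrightarrow>
     finite E \<and> E \<noteq> {}
     \<and> (\<forall>i. equiv E (sim i))
     \<and> (\<forall>i. \<forall>e\<in>E. 0 < P i e \<and> P i e \<le> 1)
     \<and> (\<forall>i. \<forall>e\<in>E. (\<Sum>e'\<in>{e'\<in>E. (e', e) \<in> sim i}. P i e') = 1)
     \<and> (\<forall>a\<in>#Phi. \<forall>b\<in>#Phi. a \<noteq> b \<longrightarrow> inf a b = bot \<or> a < b \<or> b < a)
     \<and> (\<forall>a\<in>#Phi. \<forall>k<count Phi a. (\<forall>e\<in>E. 0 \<le> pre a k e) \<and> (\<Sum>e\<in>E. pre a k e) = 1)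
     \<and> (\<forall>a\<in>#Phi. \<forall>k<count Phi a. \<forall>b\<in>#Phi. \<forall>l<count Phi b. \<forall>e\<in>E.
          pre a k e = 0 \<longrightarrow> (a < b \<or> (a = b \<and> k < l)) \<longrightarrow> pre b l e = 0)"

definition mb :: "'a::order multiset \<Rightarrow> 'a \<Rightarrow> 'a set" where
  "mb Phi a = {b. b \<in># Phi \<and> b < a \<and> \<not> (\<exists>c. c \<in># Phi \<and> c < a \<and> b < c)}"

definition mu_a :: "('i \<Rightarrow> 'a::bounded_lattice \<Rightarrow> 'a) \<Rightarrow> ('i \<Rightarrow> 'a \<rightharpoonup> real) \<Rightarrow> 'a multiset
   \<Rightarrow> 'a \<Rightarrow> 'i \<Rightarrow> 'a \<rightharpoonup> real" where
  "mu_a dia mu Phi a i = (\<lambda>x. if x \<in> Min_down dia i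
      then Some (the (mu i (inf x a)) - (\<Sum>b\<in>mb Phi a. the (mu i (inf x b))))
      else None)"

end

theory Submission
  imports Defs
begin

lemma heyting_dist:
  fixes imp :: "'a::bounded_lattice \<Rightarrow> 'a \<Rightarrow> 'a" and c x y :: 'a
  assumes "heyting imp"
  shows "inf c (sup x y) = sup (inf c x) (inf c y)"
proof -
  have h: "\<And>a b c. c \<le> imp a b \<longleftrightarrow> inf c a \<le> b" using assms unfolding heyting_def by blast
  have "x \<le> imp c (sup (inf c x) (inf c y))" using h by (simp add: inf_commute le_supI1)
  moreover have "y \<le> imp c (sup (inf c x) (inf c y))" using h by (simp add: inf_commute le_supI2)
  ultimately have "sup x y \<le> imp c (sup (inf c x) (inf c y))" by simp
  then have "inf c (sup x y) \<le> sup (inf c x) (inf c y)" using h by (simp add: inf_commute)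
  moreover have "sup (inf c x) (inf c y) \<le> inf c (sup x y)"
    by (simp add: le_infI2)
  ultimately show ?thesis by (rule order.antisym)
qed

lemma sum_join:
  fixes f :: "'a::bounded_lattice \<Rightarrow> real" and M :: "'a set"
  assumes dist: "\<And>c x y :: 'a. inf c (sup x y) = sup (inf c x) (inf c y)"
    and PA: "\<forall>m\<in>M. \<forall>b c. b\<le>m \<longrightarrow> c\<le>m \<longrightarrow> f (sup b c) = f b + f c - f (inf b c)"
    and P0: "f bot = 0"
    and fin: "finite S"
  shows "(\<forall>b\<in>S. \<forall>c\<in>S. b \<noteq> c \<longrightarrow> inf b c = bot) \<Longrightarrow>
    \<exists>B. (\<forall>w. (\<forall>b\<in>S. b \<le> w) \<longrightarrow> B \<le> w)
      \<and> (\<forall>c. (\<forall>b\<in>S. inf b c = bot) \<longrightarrow> inf B c = bot)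
      \<and> (\<forall>z m. m \<in> M \<longrightarrow> z \<le> m \<longrightarrow> (\<Sum>b\<in>S. f (inf z b)) = f (inf z B))"
  using fin
proof (induction S rule: finite_induct)
  case empty
  show ?case by (rule exI[of _ bot]) (simp add: P0)
next
  case (insert s S)
  have pwS: "\<forall>b\<in>S. \<forall>c\<in>S. b \<noteq> c \<longrightarrow> inf b c = bot" using insert.prems by (meson insertCI)
  from insert.IH[OF pwS] obtain B where BB: "(\<forall>w. (\<forall>b\<in>S. b \<le> w) \<longrightarrow> B \<le> w)
      \<and> (\<forall>c. (\<forall>b\<in>S. inf b c = bot) \<longrightarrow> inf B c = bot)
      \<and> (\<forall>z m. m \<in> M \<longrightarrow> z \<le> m \<longrightarrow> (\<Sum>b\<in>S. f (inf z b)) = f (inf z B))" ..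
  note B1 = BB[THEN conjunct1] and B2 = BB[THEN conjunct2, THEN conjunct1]
    and B3 = BB[THEN conjunct2, THEN conjunct2]
  have "\<forall>b\<in>S. inf b s = bot" using insert.prems insert.hyps(2) by auto
  then have Bs: "inf B s = bot" using B2 by blast
  show ?case
  proof (intro exI[of _ "sup B s"] conjI allI impI)
    fix w assume "\<forall>b\<in>insert s S. b \<le> w"
    then show "sup B s \<le> w" using B1 by auto
  next
    fix c assume c: "\<forall>b\<in>insert s S. inf b c = bot"
    have "inf (sup B s) c = inf c (sup B s)" by (rule inf_commute)
    also have "\<dots> = sup (inf c B) (inf c s)" by (rule dist)
    also have "inf c B = bot" using c B2 by (metis inf_commute insertCI)
    also have "inf c s = bot" using c by (metis inf_commute insertCI)
    finally show "inf (sup B s) c = bot" by simp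
  next
    fix z m assume m: "m \<in> M" "z \<le> m"
    have "(\<Sum>b\<in>insert s S. f (inf z b)) = f (inf z s) + f (inf z B)"
      using insert B3 m by simp
    also have "inf (inf z B) (inf z s) = bot"
      by (metis Bs inf_bot_right inf_left_commute inf.assoc)
    then have "f (inf z s) + f (inf z B) = f (sup (inf z B) (inf z s))"
      using PA m P0 by (metis add.commute diff_zero le_infI1)
    also have "sup (inf z B) (inf z s) = inf z (sup B s)" using dist by simp
    finally show "(\<Sum>b\<in>insert s S. f (inf z b)) = f (inf z (sup B s))" .
  qed
qed

theorem proposition5:
  fixes imp :: "'a::{finite,bounded_lattice} \<Rightarrow> 'a \<Rightarrow> 'a"
    and dia box :: "'i \<Rightarrow> 'a \<Rightarrow> 'a"
    and mu :: "'i \<Rightarrow> 'a \<rightharpoonup> real"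
    and E :: "'e set" and sim :: "'i \<Rightarrow> 'e rel" and P :: "'i \<Rightarrow> 'e \<Rightarrow> real"
    and Phi :: "'a multiset" and pre :: "'a \<Rightarrow> nat \<Rightarrow> 'e \<Rightarrow> real"
  assumes "APE_structure imp dia box mu"
    and "prob_event_structure E sim P Phi pre"
    and "a \<in># Phi"
  shows "premeasure dia i (mu_a dia mu Phi a i)
    \<and> (\<forall>x y. x \<in> dom (mu_a dia mu Phi a i) \<longrightarrow> a \<le> y \<longrightarrow>
          mu_a dia mu Phi a i x = mu_a dia mu Phi a i (inf x y))"
proof -
  define f where "f = (\<lambda>z. the (mu i z))"
  define M where "M = Min_i dia i"
  define D where "D = Min_down dia i"
  have hey: "heyting imp" using assms(1) unfolding APE_structure_def epistemic_HA_def monadic_HA_def by blast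
  have dist: "\<And>c x y::'a. inf c (sup x y) = sup (inf c x) (inf c y)" by (rule heyting_dist[OF hey])
  have pm: "premeasure dia i (mu i)" using assms(1) unfolding APE_structure_def i_measure_def by blast
  have PD: "dom (mu i) = D" using pm unfolding premeasure_def D_def by (rule conjunct1)
  have PM: "\<And>x y. x \<in> D \<Longrightarrow> y \<in> D \<Longrightarrow> x \<le> y \<Longrightarrow> f x \<le> f y"
    using pm PD unfolding premeasure_def f_def by blast
  have PA: "\<forall>m\<in>M. \<forall>b c. b\<le>m \<longrightarrow> c\<le>m \<longrightarrow> f (sup b c) = f b + f c - f (inf b c)"
    using pm unfolding premeasure_def f_def M_def by blast
  have Ddef: "\<And>x. x \<in> D \<longleftrightarrow> (\<exists>m\<in>M. x \<le> m)" unfolding D_def Min_down_def M_def by blast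
  have Ddown: "\<And>x y. x \<in> D \<Longrightarrow> y \<le> x \<Longrightarrow> y \<in> D" using Ddef by (meson order.trans)
  define S where "S = mb Phi a"
  have finS: "finite S" unfolding S_def mb_def by (rule finite_subset[of _ "set_mset Phi"]) auto
  have pes: "\<forall>a\<in>#Phi. \<forall>b\<in>#Phi. a \<noteq> b \<longrightarrow> inf a b = bot \<or> a < b \<or> b < a"
    using assms(2) unfolding prob_event_structure_def by blast
  have disj: "\<forall>b\<in>S. \<forall>c\<in>S. b \<noteq> c \<longrightarrow> inf b c = bot"
  proof (intro ballI impI)
    fix b c assume "b \<in> S" "c \<in> S" "b \<noteq> c"
    then have "b \<in># Phi" "c \<in># Phi" "\<not> b < c" "\<not> c < b" using \<open>b \<in> S\<close> \<open>c \<in> S\<close>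
      unfolding S_def mb_def by auto
    then show "inf b c = bot" using pes \<open>b \<noteq> c\<close> by metis
  qed
  have Sa: "\<forall>b\<in>S. b \<le> a" unfolding S_def mb_def by auto
  have mua: "\<And>x. mu_a dia mu Phi a i x = (if x \<in> D then Some (f (inf x a) - (\<Sum>b\<in>S. f (inf x b))) else None)"
    unfolding mu_a_def D_def f_def S_def by simp
  show ?thesis
  proof (cases "D = {}")
    case True
    have d: "dom (mu_a dia mu Phi a i) = {}" using True mua by (auto simp: dom_def)
    have nm0: "\<And>m. m \<notin> M" using True Ddef by (meson order_refl empty_iff)
    have nm: "Min_i dia i = {}" using nm0 unfolding M_def by auto
    show ?thesis unfolding premeasure_def d nm using True D_def by simp
  next
    case False
    have P0: "f bot = 0" using pm False PD unfolding premeasure_def f_def by auto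
    obtain x0 where "x0 \<in> D" using False by blast
    then have botD: "bot \<in> D" using Ddown bot_least by blast
    from sum_join[OF dist PA P0 finS disj] obtain B where BB:
       "(\<forall>w. (\<forall>b\<in>S. b \<le> w) \<longrightarrow> B \<le> w)
      \<and> (\<forall>c. (\<forall>b\<in>S. inf b c = bot) \<longrightarrow> inf B c = bot)
      \<and> (\<forall>z m. m \<in> M \<longrightarrow> z \<le> m \<longrightarrow> (\<Sum>b\<in>S. f (inf z b)) = f (inf z B))" ..
    note B1 = BB[THEN conjunct1] and B3 = BB[THEN conjunct2, THEN conjunct2]
    have Ba: "B \<le> a" using B1 Sa by blast
    define nu where "nu = (\<lambda>x. f (inf x a) - (\<Sum>b\<in>S. f (inf x b)))"
    have nuB: "\<And>x. x \<in> D \<Longrightarrow> nu x = f (inf x a) - f (inf x B)"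
    proof -
      fix x assume "x \<in> D"
      then obtain m where "m \<in> M" "x \<le> m" using Ddef by blast
      then show "nu x = f (inf x a) - f (inf x B)" using B3 unfolding nu_def by simp
    qed
    have mua2: "\<And>x. mu_a dia mu Phi a i x = (if x \<in> D then Some (nu x) else None)"
      using mua nu_def by simp
    have dom: "dom (mu_a dia mu Phi a i) = D" using mua2 by (auto simp: dom_def)
    have nu0: "nu bot = 0" unfolding nu_def using P0 by simp
    have mono: "\<And>x y. x \<in> D \<Longrightarrow> y \<in> D \<Longrightarrow> x \<le> y \<Longrightarrow> nu x \<le> nu y"
    proof -
      fix x y assume xD: "x \<in> D" and yD: "y \<in> D" and xy: "x \<le> y"
      obtain m where m: "m \<in> M" "y \<le> m" using yD Ddef by blast
      define w where "w = sup (inf x a) (inf y B)"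
      have w1: "w \<le> inf y a" unfolding w_def using xy Ba
        by (meson inf_mono le_sup_iff order_refl)
      have "inf (inf x a) (inf y B) = inf (inf x y) (inf a B)" by (simp add: inf_aci)
      also have "\<dots> = inf x B" using xy Ba by (simp add: inf.absorb1 inf.absorb2)
      finally have ii: "inf (inf x a) (inf y B) = inf x B" .
      have l1: "inf x a \<le> m" using xy m(2) by (meson inf_le1 order_trans)
      have l2: "inf y B \<le> m" using m(2) by (meson inf_le1 order_trans)
      have "f w = f (inf x a) + f (inf y B) - f (inf (inf x a) (inf y B))"
        unfolding w_def using PA m(1) l1 l2 by blast
      then have "f w = f (inf x a) + f (inf y B) - f (inf x B)" using ii by simp
      moreover have "f w \<le> f (inf y a)"
        using PM w1 Ddown yD by (meson inf_le1)
      ultimately show "nu x \<le> nu y" using nuB xD yD by simp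
    qed
    have add: "\<forall>m\<in>M. \<forall>b c. b \<le> m \<longrightarrow> c \<le> m \<longrightarrow> nu (sup b c) = nu b + nu c - nu (inf b c)"
    proof (intro ballI allI impI)
      fix m b c assume m: "m \<in> M" and bm: "b \<le> m" and cm: "c \<le> m"
      have e: "\<And>t. f (inf (sup b c) t) = f (inf b t) + f (inf c t) - f (inf (inf b c) t)"
      proof -
        fix t
        have "inf (sup b c) t = sup (inf b t) (inf c t)" using dist by (simp add: inf_commute)
        moreover have "inf (inf b t) (inf c t) = inf (inf b c) t"
          by (simp add: inf_aci)
        moreover have "inf b t \<le> m" "inf c t \<le> m" using bm cm by (meson inf_le1 order_trans)+
        ultimately show "?thesis t" using PA m by simp
      qed
      show "nu (sup b c) = nu b + nu c - nu (inf b c)"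
        unfolding nu_def e by (simp add: sum_subtractf sum.distrib algebra_simps)
    qed
    have P1: "premeasure dia i (mu_a dia mu Phi a i)"
      unfolding premeasure_def
    proof (intro conjI ballI allI impI)
      show "dom (mu_a dia mu Phi a i) = Min_down dia i" using dom D_def by simp
    next
      fix x assume "x \<in> dom (mu_a dia mu Phi a i)"
      then have "x \<in> D" using dom by simp
      then show "0 \<le> the (mu_a dia mu Phi a i x)" using mono[OF botD, of x] nu0 mua2 by simp
    next
      fix x y assume "x \<in> dom (mu_a dia mu Phi a i)" "y \<in> dom (mu_a dia mu Phi a i)" "x \<le> y"
      then show "the (mu_a dia mu Phi a i x) \<le> the (mu_a dia mu Phi a i y)"
        using mono dom mua2 by simp
    next
      fix m b c assume m: "m \<in> Min_i dia i" and bm: "b \<le> m" and cm: "c \<le> m"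
      have "sup b c \<in> D" "b \<in> D" "c \<in> D" "inf b c \<in> D"
        using m bm cm Ddef M_def by (auto intro: le_infI1)
      then show "the (mu_a dia mu Phi a i (sup b c)) = the (mu_a dia mu Phi a i b)
          + the (mu_a dia mu Phi a i c) - the (mu_a dia mu Phi a i (inf b c))"
        using add m bm cm mua2 M_def by simp
    next
      show "mu_a dia mu Phi a i bot = Some 0" using mua2 botD nu0 by simp
    qed
    have P2: "\<forall>x y. x \<in> dom (mu_a dia mu Phi a i) \<longrightarrow> a \<le> y \<longrightarrow>
          mu_a dia mu Phi a i x = mu_a dia mu Phi a i (inf x y)"
    proof (intro allI impI)
      fix x y assume xd: "x \<in> dom (mu_a dia mu Phi a i)" and ay: "a \<le> y"
      then have xD: "x \<in> D" and xyD: "inf x y \<in> D" using dom Ddown by auto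
      have "inf (inf x y) a = inf x (inf y a)" by (simp add: inf_aci)
      then have "inf (inf x y) a = inf x a" using ay by (simp add: inf.absorb2)
      moreover have "\<And>b. b \<in> S \<Longrightarrow> inf (inf x y) b = inf x b"
      proof -
        fix b assume "b \<in> S"
        then have "b \<le> y" using ay Sa order_trans by blast
        have "inf (inf x y) b = inf x (inf y b)" by (simp add: inf_aci)
        then show "inf (inf x y) b = inf x b" using \<open>b \<le> y\<close> by (simp add: inf.absorb2)
      qed
      ultimately have "nu (inf x y) = nu x" unfolding nu_def by simp
      then show "mu_a dia mu Phi a i x = mu_a dia mu Phi a i (inf x y)"
        using mua2 xD xyD by simp
    qed
    show ?thesis using P1 P2 by blast
  qed
qed

end
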